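(* Let $\mathcal H_A,\mathcal H_B$ be finite-dimensional complex Hilbert spaces and let $\rho$ be a separable density matrix on $\mathcal H_A\otimes\mathcal H_B$ with full rank, $\mathcal R(\rho)=\dim(\mathcal H_A\otimes\mathcal H_B)$. If $\rho$ lies on the boundary of the set of PPT states, then $\mathcal R(\rho)>\mathcal R(\rho^{T_B})$.
   Context: $\rho^{T_B}=(\mathbf 1_A\otimes T)\rho$ is the partial transpose, with $T$ transposition in a chosen basis of $\mathcal H_B$. The set of PPT states is $\{\rho\ \text{density matrix}:\rho^{T_B}\ge 0\}$, a closed convex subset of the set of density matrices; its boundary is taken relative to the set of density matrices (so boundary points are arbitrarily close to density matrices whose partial transpose has a negative eigenvalue). $\mathcal R(\cdot)$ denotes the rank. $\rho$ is separable if it is a convex combination of pure product states $|\psi\rangle\langle\psi|\otimes|\phi\rangle\langle\phi|$. *)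

theory Defs
  imports "HOL-Analysis.Analysis"
begin

text \<open>Bipartite system: H_A = complex^'a, H_B = complex^'b (finite index types, i.e.
  finite-dimensional Hilbert spaces with a chosen orthonormal basis).\<close>

type_synonym ('a, 'b) bimat = "complex ^ ('a \<times> 'b) ^ ('a \<times> 'b)"

definition psd :: "complex ^ 'n ^ 'n \<Rightarrow> bool" where
  "psd M \<longleftrightarrow> (\<forall>x :: complex ^ 'n.
     let q = (\<Sum>i\<in>UNIV. cnj (x $ i) * (M *v x) $ i) in Im q = 0 \<and> Re q \<ge> 0)"

definition density_matrix :: "complex ^ 'n ^ 'n \<Rightarrow> bool" where
  "density_matrix M \<longleftrightarrow> psd M \<and> (\<Sum>i\<in>UNIV. M $ i $ i) = 1"

definition partial_transpose :: "('a::finite, 'b::finite) bimat \<Rightarrow> ('a, 'b) bimat" where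
  "partial_transpose \<rho> = (\<chi> r c. \<rho> $ (fst r, snd c) $ (fst c, snd r))"

definition product_state :: "complex ^ 'a \<Rightarrow> complex ^ 'b \<Rightarrow> ('a::finite, 'b::finite) bimat" where
  "product_state \<psi> \<phi> =
     (\<chi> r c. \<psi> $ fst r * cnj (\<psi> $ fst c) * (\<phi> $ snd r * cnj (\<phi> $ snd c)))"

definition pure_product_states :: "('a::finite, 'b::finite) bimat set" where
  "pure_product_states = {product_state \<psi> \<phi> | \<psi> \<phi>. norm \<psi> = 1 \<and> norm \<phi> = 1}"

definition separable :: "('a::finite, 'b::finite) bimat \<Rightarrow> bool" where
  "separable \<rho> \<longleftrightarrow> \<rho> \<in> convex hull pure_product_states"

definition density_matrices :: "('a::finite, 'b::finite) bimat set" where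
  "density_matrices = {\<rho>. density_matrix \<rho>}"

definition PPT_states :: "('a::finite, 'b::finite) bimat set" where
  "PPT_states = {\<rho>. density_matrix \<rho> \<and> psd (partial_transpose \<rho>)}"

text \<open>Boundary of the PPT set relative to the set of density matrices: PPT states that are
  limits of density matrices whose partial transpose is not positive semidefinite.\<close>
definition PPT_boundary :: "('a::finite, 'b::finite) bimat set" where
  "PPT_boundary = PPT_states \<inter> closure (density_matrices - PPT_states)"

end

theory Submission
  imports Defs
begin

lemma rank_full_inj:
  fixes A :: "complex^'n^'n"
  assumes "rank A = CARD('n)" "A *v x = 0"
  shows "x = 0"
proof -
  have "vec.span (rows A) = UNIV"
    using assms(1) unfolding row_rank_def_gen
    by (simp add: vec.dim_eq_full [symmetric] card_cart_basis vec.dimension_def)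
  then obtain B :: "complex^'n^'n" where "B ** A = mat 1"
    using matrix_left_invertible_span_rows_gen by blast
  then have "x = B *v (A *v x)" by (simp add: matrix_vector_mul_assoc)
  then show ?thesis using assms(2) by simp
qed

lemma rank_le: "rank (A::complex^'n^'n) \<le> CARD('n)"
  unfolding row_rank_def_gen by (rule dim_subset_UNIV_cart_gen)

definition bf :: "complex^'n^'n \<Rightarrow> complex^'n \<Rightarrow> complex^'n \<Rightarrow> complex" where
  "bf M y x = (\<Sum>i\<in>UNIV. \<Sum>j\<in>UNIV. cnj (y$i) * M$i$j * x$j)"

lemma psd_bf: "psd M \<longleftrightarrow> (\<forall>x. Im (bf M x x) = 0 \<and> Re (bf M x x) \<ge> 0)"
proof -
  have "(\<Sum>i\<in>UNIV. cnj (x $ i) * (M *v x) $ i) = bf M x x" for x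
    by (simp add: bf_def matrix_vector_mult_def sum_distrib_left mult.assoc)
  then show ?thesis unfolding psd_def Let_def by simp
qed

lemma bf_add_left: "bf M (y + z) x = bf M y x + bf M z x"
  by (simp add: bf_def distrib_left distrib_right sum.distrib)
lemma bf_add_right: "bf M y (x + z) = bf M y x + bf M y z"
  by (simp add: bf_def distrib_left distrib_right sum.distrib)
lemma bf_scale_left: "bf M (c *s y) x = cnj c * bf M y x"
  by (simp add: bf_def sum_distrib_left mult.assoc)
lemma bf_scale_right: "bf M y (c *s x) = c * bf M y x"
  by (simp add: bf_def sum_distrib_left mult.assoc mult.left_commute)
lemma mult_delta1: "a * (if P then 1 else 0) = (if P then a else (0::complex))" by simp
lemma mult_delta2: "cnj (if P then 1 else 0) * a = (if P then a else (0::complex))" by simp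
lemma bf_axis: "bf M (axis i 1) (axis j 1) = M$i$j"
  unfolding bf_def axis_def by (simp only: vec_lambda_beta mult_delta1 mult_delta2 sum.delta sum.delta' finite UNIV_I if_True)
lemma bf_zero [simp]: "bf M 0 x = 0" "bf M y 0 = 0"
  by (simp_all add: bf_def)
lemma bf_diff_mat: "bf (A - B) y x = bf A y x - bf B y x"
  by (simp add: bf_def algebra_simps sum_subtractf)

lemma psd_herm:
  assumes "psd M" shows "M$i$j = cnj (M$j$i)"
proof -
  let ?e = "\<lambda>k. axis k (1::complex)"
  have q: "Im (bf M x x) = 0" for x using assms psd_bf by blast
  have ii: "Im (M$i$i) = 0" using q[of "?e i"] by (simp add: bf_axis)
  have jj: "Im (M$j$j) = 0" using q[of "?e j"] by (simp add: bf_axis)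
  have "Im (bf M (?e i + ?e j) (?e i + ?e j)) = 0" by (rule q)
  then have 1: "Im (M$i$j + M$j$i) = 0" using ii jj
    by (simp add: bf_add_left bf_add_right bf_axis)
  have "Im (bf M (?e i + \<i> *s ?e j) (?e i + \<i> *s ?e j)) = 0" by (rule q)
  then have 2: "Re (M$i$j - M$j$i) = 0" using ii jj
    by (simp add: bf_add_left bf_add_right bf_axis bf_scale_left bf_scale_right)
  show ?thesis using 1 2 by (simp add: complex_eq_iff)
qed

lemma herm_bf:
  assumes "\<And>i j. M$i$j = cnj (M$j$i)"
  shows "bf M y x = cnj (bf M x y)"
proof -
  have h: "cnj (M$j$i) = M$i$j" for i j using assms[of i j] by simp
  have "bf M y x = (\<Sum>j\<in>UNIV. \<Sum>i\<in>UNIV. cnj (y$i) * M$i$j * x$j)"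
    unfolding bf_def by (rule sum.swap)
  also have "\<dots> = (\<Sum>j\<in>UNIV. \<Sum>i\<in>UNIV. cnj (cnj (x$j) * M$j$i * y$i))"
    using h by (simp add: mult.commute mult.left_commute)
  also have "\<dots> = cnj (bf M x y)" by (simp add: bf_def)
  finally show ?thesis .
qed


lemma pt_herm:
  assumes "\<And>i j. \<rho>$i$j = cnj (\<rho>$j$i)"
  shows "(partial_transpose \<rho>)$r$c = cnj ((partial_transpose \<rho>)$c$r)"
  unfolding partial_transpose_def vec_lambda_beta by (rule assms)

lemma bf_self_sum: "bf M y x = (\<Sum>i\<in>UNIV. cnj (y$i) * (M *v x)$i)"
  by (simp add: bf_def matrix_vector_mult_def sum_distrib_left mult.assoc)

lemma cnj_mult_self: "cnj z * z = complex_of_real ((cmod z)^2)"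
  by (subst complex_norm_square) (rule mult.commute)

lemma psd_kernel:
  assumes "psd M" "Re (bf M x x) = 0"
  shows "M *v x = 0"
proof -
  have herm: "M$i$j = cnj (M$j$i)" for i j using psd_herm[OF assms(1)] .
  define y where "y = M *v x"
  define \<beta> where "\<beta> = bf M y x"
  have \<beta>: "\<beta> = of_real (\<Sum>i\<in>UNIV. (cmod (y$i))^2)"
  proof -
    have "\<beta> = (\<Sum>i\<in>UNIV. cnj (y$i) * y$i)" unfolding \<beta>_def
      by (simp only: bf_self_sum y_def)
    also have "\<dots> = (\<Sum>i\<in>UNIV. of_real ((cmod (y$i))^2))"
      by (rule sum.cong[OF refl]) (rule cnj_mult_self)
    also have "\<dots> = of_real (\<Sum>i\<in>UNIV. (cmod (y$i))^2)"
      by (simp only: of_real_sum)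
    finally show ?thesis .
  qed
  define b where "b = (\<Sum>i\<in>UNIV. (cmod (y$i))^2)"
  have b0: "b \<ge> 0" unfolding b_def by (simp add: sum_nonneg)
  have bxy: "bf M x y = of_real b"
    using herm_bf[of M x y, OF herm] \<beta> unfolding \<beta>_def b_def by simp
  have "Im (bf M x x) = 0" using assms(1) psd_bf by blast
  then have q0: "bf M x x = 0" using assms(2) by (simp add: complex_eq_iff)
  define Q where "Q = Re (bf M y y)"
  have Q0: "Q \<ge> 0" using assms(1) psd_bf Q_def by blast
  have key: "0 \<le> t*t*Q - 2*t*b" if "t \<ge> 0" for t :: real
  proof -
    let ?c = "complex_of_real (-t)"
    have ge: "Re (bf M (x + ?c *s y) (x + ?c *s y)) \<ge> 0" using assms(1) psd_bf by blast
    have e1: "bf M (x + ?c *s y) (x + ?c *s y) = bf M x x + ?c * bf M x y + cnj ?c * bf M y x + cnj ?c * ?c * bf M y y"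
      by (simp only: bf_add_left bf_add_right bf_scale_left bf_scale_right) (simp add: algebra_simps)
    have e2: "bf M y x = of_real b" using \<beta> unfolding \<beta>_def b_def .
    have e3: "Re (bf M (x + ?c *s y) (x + ?c *s y)) = t*t*Q - 2*t*b"
    proof -
      have "Re (bf M (x + ?c *s y) (x + ?c *s y)) = Re (0 + ?c * of_real b + cnj ?c * of_real b + cnj ?c * ?c * bf M y y)"
        by (simp only: e1 q0 bxy e2)
      also have "\<dots> = t*t*Re (bf M y y) - 2*t*b" by (simp add: algebra_simps)
      finally show ?thesis unfolding Q_def .
    qed
    show ?thesis using ge e3 by simp
  qed
  have "b = 0"
  proof (rule ccontr)
    assume "b \<noteq> 0"
    then have bp: "b > 0" using b0 by simp
    define t where "t = b / (Q + 1)"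
    have tp: "t > 0" using bp Q0 by (simp add: t_def)
    have "t * Q < b" using bp Q0 unfolding t_def by (simp add: field_simps)
    then have "t*t*Q - 2*t*b < 0" using tp bp
    proof -
      have "t*(t*Q) < t*b" using tp \<open>t * Q < b\<close> by simp
      then show ?thesis using tp bp by (simp add: algebra_simps)
    qed
    with key[of t] tp show False by simp
  qed
  then have "\<forall>i\<in>UNIV. (cmod (y$i))^2 = 0" unfolding b_def
    by (subst sum_nonneg_eq_0_iff[symmetric]) auto
  then have "y = 0" by (simp add: vec_eq_iff)
  then show ?thesis by (simp add: y_def)
qed

lemma bf_scaleR: "bf M (r *\<^sub>R x) (r *\<^sub>R x) = of_real (r*r) * bf M x x"
proof -
  have c: "(r *\<^sub>R x)$i = complex_of_real r * x$i" for i
    by (simp only: vector_scaleR_component) (simp add: scaleR_conv_of_real)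
  have "r *\<^sub>R x = complex_of_real r *s x" by (simp only: vec_eq_iff c vector_smult_component) simp
  then show ?thesis by (simp add: bf_scale_left bf_scale_right)
qed

lemma bf_bound:
  fixes A :: "complex^'n^'n"
  assumes "\<And>i j. cmod (A$i$j) \<le> K"
  shows "cmod (bf A x x) \<le> real CARD('n) * real CARD('n) * K * (norm x)^2"
proof -
  have nl: "cmod (x$k) \<le> norm x" for k by (rule Finite_Cartesian_Product.norm_nth_le)
  have "cmod (bf A x x) \<le> (\<Sum>i\<in>UNIV. \<Sum>j\<in>UNIV. cmod (cnj (x$i) * A$i$j * x$j))"
    unfolding bf_def by (rule order_trans[OF norm_sum sum_mono[OF norm_sum]])
  also have "\<dots> \<le> (\<Sum>i\<in>(UNIV::'n set). \<Sum>j\<in>(UNIV::'n set). norm x * K * norm x)"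
  proof (intro sum_mono)
    fix i j
    have "cmod (cnj (x$i) * A$i$j * x$j) = cmod (x$i) * cmod (A$i$j) * cmod (x$j)"
      by (simp add: norm_mult)
    also have "\<dots> \<le> norm x * K * norm x"
      using order_trans[OF norm_ge_zero assms] nl[of i] nl[of j] assms[of i j]
      by (intro mult_mono) auto
    finally show "cmod (cnj (x$i) * A$i$j * x$j) \<le> norm x * K * norm x" .
  qed
  also have "\<dots> = real CARD('n) * real CARD('n) * K * (norm x)^2"
    by (simp add: power2_eq_square)
  finally show ?thesis .
qed

lemma bf_cont: "continuous_on S (\<lambda>x. Re (bf M x x))"
  unfolding bf_def
  apply (intro continuous_on_Re continuous_on_sum continuous_on_mult continuous_on_cnj continuous_on_const)
  apply (rule continuous_on_component[OF continuous_on_id])+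
  done
theorem lemma2:
  fixes \<rho> :: "('a::finite, 'b::finite) bimat"
  assumes "density_matrix \<rho>"
    and "separable \<rho>"
    and "rank \<rho> = CARD('a \<times> 'b)"
    and "\<rho> \<in> PPT_boundary"
  shows "rank \<rho> > rank (partial_transpose \<rho>)"
proof (rule ccontr)
  assume "\<not> rank \<rho> > rank (partial_transpose \<rho>)"
  then have rk: "rank (partial_transpose \<rho>) = CARD('a \<times> 'b)"
    using assms(3) rank_le[of "partial_transpose \<rho>"] by simp
  define P where "P = partial_transpose \<rho>"
  have bd: "\<rho> \<in> PPT_states" "\<rho> \<in> closure (density_matrices - PPT_states)"
    using assms(4) unfolding PPT_boundary_def by auto
  have psdP: "psd P" using bd(1) unfolding PPT_states_def P_def by simp
  have pos: "Re (bf P x x) > 0" if "x \<noteq> 0" for x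
  proof -
    have "Re (bf P x x) \<ge> 0" using psdP psd_bf by blast
    moreover have "Re (bf P x x) \<noteq> 0"
    proof
      assume "Re (bf P x x) = 0"
      then have "P *v x = 0" using psd_kernel[OF psdP] by blast
      then have "x = 0" using rank_full_inj[of P x] rk unfolding P_def by simp
      with that show False by simp
    qed
    ultimately show ?thesis by simp
  qed
  define S where "S = sphere (0::complex^('a\<times>'b)) 1"
  have cS: "compact S" and neS: "S \<noteq> {}" unfolding S_def by auto
  have "\<exists>x\<in>S. \<forall>y\<in>S. Re (bf P x x) \<le> Re (bf P y y)"
    by (rule continuous_attains_inf[OF cS neS bf_cont])
  then obtain x0 where x0: "x0 \<in> S" "\<And>y. y \<in> S \<Longrightarrow> Re (bf P x0 x0) \<le> Re (bf P y y)"
    by blast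
  define m where "m = Re (bf P x0 x0)"
  have "x0 \<noteq> 0" using x0(1) unfolding S_def by auto
  then have mpos: "m > 0" unfolding m_def by (rule pos)
  have lower: "Re (bf P x x) \<ge> m * (norm x)^2" for x
  proof (cases "x = 0")
    case True then show ?thesis by simp
  next
    case False
    define u where "u = (1 / norm x) *\<^sub>R x"
    have "u \<in> S" using False unfolding S_def u_def by simp
    then have "m \<le> Re (bf P u u)" using x0 m_def by simp
    also have "bf P u u = of_real (1 / (norm x)^2) * bf P x x"
      unfolding u_def bf_scaleR by (simp add: power2_eq_square)
    finally have "m \<le> Re (bf P x x) / (norm x)^2" by simp
    then show ?thesis using False by (simp add: field_simps)
  qed
  define N where "N = real CARD('a \<times> 'b)"
  have Npos: "N > 0" unfolding N_def by simp
  define \<delta> where "\<delta> = m / (N * N)"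
  have "\<delta> > 0" unfolding \<delta>_def using mpos Npos by simp
  then obtain \<sigma> where \<sigma>: "\<sigma> \<in> density_matrices - PPT_states" "dist \<sigma> \<rho> < \<delta>"
    using bd(2) closure_approachable by blast
  have dm: "density_matrix \<sigma>" using \<sigma>(1) unfolding density_matrices_def by simp
  then have psds: "psd \<sigma>" unfolding density_matrix_def by simp
  have hs: "partial_transpose \<sigma> $ r $ c = cnj (partial_transpose \<sigma> $ c $ r)" for r c
    by (rule pt_herm) (rule psd_herm[OF psds])
  have "psd (partial_transpose \<sigma>)"
    unfolding psd_bf
  proof
    fix x
    have im: "Im (bf (partial_transpose \<sigma>) x x) = 0"
      using herm_bf[of "partial_transpose \<sigma>" x x, OF hs] by (simp add: complex_eq_iff)
    have ent: "cmod ((partial_transpose \<sigma> - P) $ r $ c) \<le> dist \<sigma> \<rho>" for r c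
    proof -
      have "(partial_transpose \<sigma> - P) $ r $ c = (\<sigma> - \<rho>) $ (fst r, snd c) $ (fst c, snd r)"
        unfolding P_def partial_transpose_def by simp
      also have "cmod \<dots> \<le> norm ((\<sigma> - \<rho>) $ (fst r, snd c))" by (rule Finite_Cartesian_Product.norm_nth_le)
      also have "\<dots> \<le> norm (\<sigma> - \<rho>)" by (rule Finite_Cartesian_Product.norm_nth_le)
      finally show ?thesis by (simp add: dist_norm)
    qed
    have "cmod (bf (partial_transpose \<sigma> - P) x x) \<le> N * N * dist \<sigma> \<rho> * (norm x)^2"
      unfolding N_def by (rule bf_bound[OF ent])
    also have "\<dots> \<le> m * (norm x)^2"
    proof -
      have "N * N * dist \<sigma> \<rho> \<le> N * N * \<delta>" using \<sigma>(2) Npos by simp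
      also have "\<dots> = m" unfolding \<delta>_def using Npos by simp
      finally show ?thesis by (simp add: mult_right_mono)
    qed
    finally have "cmod (bf (partial_transpose \<sigma> - P) x x) \<le> m * (norm x)^2" .
    then have "Re (bf (partial_transpose \<sigma> - P) x x) \<ge> - m * (norm x)^2"
      using abs_Re_le_cmod[of "bf (partial_transpose \<sigma> - P) x x"] by linarith
    then have "Re (bf (partial_transpose \<sigma>) x x) \<ge> 0"
      using lower[of x] by (simp add: bf_diff_mat)
    then show "Im (bf (partial_transpose \<sigma>) x x) = 0 \<and> 0 \<le> Re (bf (partial_transpose \<sigma>) x x)"
      using im by simp
  qed
  then have "\<sigma> \<in> PPT_states" using dm unfolding PPT_states_def by simp
  with \<sigma>(1) show False by simp
qed

end
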